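(* Let $k\ge1$ and let $f:\mathbb{N}^k\to\mathbb{N}$ be bad. Then $f\notin\mathscr{C}_{I_{\bar d=0}}$.
   Context: $\mathbb{N}=\{0,1,2,\dots\}$. For $A\subseteq\mathbb{N}$, $\bar d(A)=\limsup_{n\to\infty}\frac{|A\cap[0,n)|}{n}$. $\mathscr{C}_{I_{\bar d=0}}$ is the set of all finitary functions $f:\mathbb{N}^k\to\mathbb{N}$ ($k\ge1$) such that $\bar d(f[A^k])=0$ whenever $\bar d(A)=0$. A function $f:\mathbb{N}^k\to\mathbb{N}$ is called bad if there exists a rational $\varepsilon>0$ such that for every $i\in\mathbb{N}$ there are $n,t\ge i$ and $A\subseteq[i,n)$ with $|A\cap[0,r)|\le\frac{r}{2^i}$ for all $r\in\mathbb{N}$ and $|f[A^k]\cap[0,t)|\ge\varepsilon t$. *)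

theory Defs
  imports "HOL-Analysis.Analysis"
begin

text \<open>Functions N^k -> N are represented as f :: nat list => nat, where only
  argument lists of length k matter.\<close>

definition upper_density :: "nat set \<Rightarrow> ereal" where
  "upper_density A = limsup (\<lambda>n. ereal (real (card (A \<inter> {..<n})) / real n))"

definition cart_power :: "nat set \<Rightarrow> nat \<Rightarrow> nat list set" where
  "cart_power A k = {xs. length xs = k \<and> set xs \<subseteq> A}"

definition in_C_dbar0 :: "nat \<Rightarrow> (nat list \<Rightarrow> nat) \<Rightarrow> bool" where
  "in_C_dbar0 k f \<longleftrightarrow> k \<ge> 1 \<and>
     (\<forall>A. upper_density A = 0 \<longrightarrow> upper_density (f ` cart_power A k) = 0)"

definition bad :: "nat \<Rightarrow> (nat list \<Rightarrow> nat) \<Rightarrow> bool" where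
  "bad k f \<longleftrightarrow> (\<exists>\<epsilon>::real. \<epsilon> \<in> \<rat> \<and> \<epsilon> > 0 \<and>
     (\<forall>i::nat. \<exists>n t A. n \<ge> i \<and> t \<ge> i \<and> A \<subseteq> {i..<n} \<and>
        (\<forall>r::nat. real (card (A \<inter> {..<r})) \<le> real r / 2 ^ i) \<and>
        real (card (f ` cart_power A k \<inter> {..<t})) \<ge> \<epsilon> * real t))"

end

theory Submission
  imports Defs
begin

lemma geo_bound: "(\<Sum>i\<in>{m..<r}. (1/2::real)^i) \<le> 2 * (1/2)^m"
proof -
  have g: "(\<Sum>j<d. (1/2::real)^j) = 2 - 2*(1/2)^d" for d
    by (induction d) auto
  have "(\<Sum>i\<in>{m..<r}. (1/2::real)^i) \<le> (\<Sum>i\<in>{m..<m+r}. (1/2::real)^i)"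
    by (rule sum_mono2) auto
  also have "\<dots> = (\<Sum>j<r. (1/2::real)^(m+j))"
    by (rule sum.reindex_bij_witness[of _ "\<lambda>i. i + m" "\<lambda>i. i - m"]) auto
  also have "\<dots> = (1/2)^m * (\<Sum>j<r. (1/2::real)^j)"
    by (simp add: power_add sum_distrib_left)
  also have "\<dots> \<le> 2 * (1/2)^m" using g[of r] by simp
  finally show ?thesis .
qed

lemma ud_nonneg: "upper_density A \<ge> 0"
  unfolding upper_density_def
  by (rule le_Limsup) auto

theorem mainTheorem3:
  fixes k :: nat and f :: "nat list \<Rightarrow> nat"
  assumes "k \<ge> 1" and "bad k f"
  shows "\<not> in_C_dbar0 k f"
proof -
  obtain \<epsilon> :: real where ep: "\<epsilon> > 0" and
    ex: "\<forall>i::nat. \<exists>n t A. n \<ge> i \<and> t \<ge> i \<and> A \<subseteq> {i..<n} \<and>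
        (\<forall>r::nat. real (card (A \<inter> {..<r})) \<le> real r / 2 ^ i) \<and>
        real (card (f ` cart_power A k \<inter> {..<t})) \<ge> \<epsilon> * real t"
    using assms(2) unfolding bad_def by blast
  from ex obtain N T AA where h: "\<And>i. N i \<ge> i \<and> T i \<ge> i \<and> AA i \<subseteq> {i..<N i} \<and>
        (\<forall>r::nat. real (card (AA i \<inter> {..<r})) \<le> real r / 2 ^ i) \<and>
        real (card (f ` cart_power (AA i) k \<inter> {..<T i})) \<ge> \<epsilon> * real (T i)"
    by metis
  define A where "A = (\<Union>i. AA i)"
  have finAA: "finite (AA i)" for i using h[of i] finite_subset by blast
  have cnt: "real (card (A \<inter> {..<r})) \<le> real (card (\<Union>i<m. AA i)) + real r * (2 * (1/2)^m)"
    for m r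
  proof -
    have sub: "A \<inter> {..<r} \<subseteq> (\<Union>i<m. AA i) \<union> (\<Union>i\<in>{m..<r}. AA i \<inter> {..<r})"
    proof
      fix x assume "x \<in> A \<inter> {..<r}"
      then obtain i where "x \<in> AA i" "x < r" unfolding A_def by auto
      moreover have "i \<le> x" using h[of i] \<open>x \<in> AA i\<close> by auto
      ultimately show "x \<in> (\<Union>i<m. AA i) \<union> (\<Union>i\<in>{m..<r}. AA i \<inter> {..<r})"
        by (cases "i < m") auto
    qed
    have f1: "finite (\<Union>i<m. AA i)" using finAA by auto
    have f2: "finite (\<Union>i\<in>{m..<r}. AA i \<inter> {..<r})" by auto
    have "card (A \<inter> {..<r}) \<le> card ((\<Union>i<m. AA i) \<union> (\<Union>i\<in>{m..<r}. AA i \<inter> {..<r}))"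
      using sub f1 f2 by (intro card_mono) auto
    also have "\<dots> \<le> card (\<Union>i<m. AA i) + card (\<Union>i\<in>{m..<r}. AA i \<inter> {..<r})"
      by (rule card_Un_le)
    also have "\<dots> \<le> card (\<Union>i<m. AA i) + (\<Sum>i\<in>{m..<r}. card (AA i \<inter> {..<r}))"
      using card_UN_le[of "{m..<r}" "\<lambda>i. AA i \<inter> {..<r}"] by auto
    finally have "real (card (A \<inter> {..<r})) \<le> real (card (\<Union>i<m. AA i)) + (\<Sum>i\<in>{m..<r}. real (card (AA i \<inter> {..<r})))"
      by (metis of_nat_add of_nat_le_iff of_nat_sum)
    also have "(\<Sum>i\<in>{m..<r}. real (card (AA i \<inter> {..<r}))) \<le> (\<Sum>i\<in>{m..<r}. real r * (1/2)^i)"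
      apply (rule sum_mono) using h by (simp add: power_divide)
    also have "\<dots> = real r * (\<Sum>i\<in>{m..<r}. (1/2)^i)" by (simp add: sum_distrib_left)
    also have "\<dots> \<le> real r * (2 * (1/2)^m)"
      by (rule mult_left_mono[OF geo_bound]) auto
    finally show ?thesis by simp
  qed
  have dA: "upper_density A = 0"
  proof (rule antisym)
    show "upper_density A \<le> 0"
    proof (rule ereal_le_epsilon2)
      fix \<delta> :: real assume d: "\<delta> > 0"
      obtain m where m: "(1/2::real)^m < \<delta>/4" using real_arch_pow_inv[of "\<delta>/4" "1/2"] d by auto
      define C where "C = real (card (\<Union>i<m. AA i))"
      obtain R :: nat where R: "real R > 2 * C / \<delta>" using reals_Archimedean2 by blast
      have "eventually (\<lambda>r. ereal (real (card (A \<inter> {..<r})) / real r) \<le> ereal \<delta>) sequentially"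
        unfolding eventually_sequentially
      proof (intro exI[of _ "Suc R"] allI impI)
        fix r assume r: "Suc R \<le> r"
        then have rpos: "real r > 0" by simp
        have Cle: "C / real r \<le> \<delta>/2"
        proof -
          have "2 * C / \<delta> < real r" using R r by linarith
          then have "2 * C < real r * \<delta>" using d by (simp add: divide_less_eq mult.commute)
          then show ?thesis using rpos by (simp add: divide_le_eq mult.commute)
        qed
        have "real (card (A \<inter> {..<r})) / real r \<le> (C + real r * (2 * (1/2)^m)) / real r"
          using cnt[of r m] rpos unfolding C_def by (simp add: divide_right_mono)
        also have "\<dots> = C / real r + 2 * (1/2)^m" using rpos by (simp add: field_simps)
        also have "\<dots> \<le> \<delta>" using Cle m by linarith
        finally show "ereal (real (card (A \<inter> {..<r})) / real r) \<le> ereal \<delta>" by simp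
      qed
      then have "upper_density A \<le> ereal \<delta>"
        unfolding upper_density_def by (rule Limsup_bounded)
      then show "upper_density A \<le> 0 + ereal \<delta>" by simp
    qed
    show "0 \<le> upper_density A" by (rule ud_nonneg)
  qed
  have dB: "upper_density (f ` cart_power A k) \<ge> ereal \<epsilon>"
  proof -
    let ?B = "f ` cart_power A k"
    have "ereal \<epsilon> \<le> Sup ((\<lambda>n. ereal (real (card (?B \<inter> {..<n})) / real n)) ` {j..})" for j
    proof -
      have Tj: "T (Suc j) \<ge> Suc j" using h by blast
      then have Tpos: "real (T (Suc j)) > 0" by simp
      have "cart_power (AA (Suc j)) k \<subseteq> cart_power A k"
        unfolding cart_power_def A_def by auto
      then have "f ` cart_power (AA (Suc j)) k \<inter> {..<T (Suc j)} \<subseteq> ?B \<inter> {..<T (Suc j)}" by auto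
      then have "card (f ` cart_power (AA (Suc j)) k \<inter> {..<T (Suc j)}) \<le> card (?B \<inter> {..<T (Suc j)})"
        by (intro card_mono) auto
      then have "\<epsilon> * real (T (Suc j)) \<le> real (card (?B \<inter> {..<T (Suc j)}))"
        using h[of "Suc j"] by linarith
      then have "\<epsilon> \<le> real (card (?B \<inter> {..<T (Suc j)})) / real (T (Suc j))"
        using Tpos by (simp add: le_divide_eq)
      then have "ereal \<epsilon> \<le> ereal (real (card (?B \<inter> {..<T (Suc j)})) / real (T (Suc j)))" by simp
      also have "\<dots> \<le> Sup ((\<lambda>n. ereal (real (card (?B \<inter> {..<n})) / real n)) ` {j..})"
        using Tj by (intro Sup_upper) auto
      finally show ?thesis .
    qed
    then show ?thesis unfolding upper_density_def limsup_INF_SUP by (intro INF_greatest) auto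
  qed
  show ?thesis
  proof
    assume "in_C_dbar0 k f"
    then have "upper_density (f ` cart_power A k) = 0" using dA unfolding in_C_dbar0_def by blast
    then show False using dB ep by simp
  qed
qed

end
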